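(* Let $n\ge1$ and $\mathbf{P}_A,\mathbf{P}_B,\mathbf{Q}_A,\mathbf{Q}_B\in\mathbb{R}^{n\times n}$ be symmetric positive definite. If $\mathbf{B}$ is a symmetric positive definite matrix such that $\mathcal{E}(\mathbf{B})$ tightly circumscribes $\mathcal{V}^*$, then there exists $\omega_1\in[0,1]$ such that $\mathbf{B}=\mathbf{B}_{\mathrm{SCI}}(\omega_1)$.
   Context: $\mathbf{C}_A=\mathbf{P}_A+\mathbf{Q}_A$, $\mathbf{C}_B=\mathbf{P}_B+\mathbf{Q}_B$. For $\omega\in[0,1]$, $\bar\omega=1-\omega$: $\mathbf{B}_{\mathrm{SCI}}(\omega)^{-1}=\omega(\mathbf{P}_A+\omega\mathbf{Q}_A)^{-1}+\bar\omega(\mathbf{P}_B+\bar\omega\mathbf{Q}_B)^{-1}$. $\mathcal{A}_{\mathrm{Split}}=\{\mathbf{M} : \begin{bmatrix}\mathbf{P}_A & \mathbf{M}\\ \mathbf{M}^\intercal & \mathbf{P}_B\end{bmatrix}\succeq 0\}$. $\mathbf{C}_F(\mathbf{K},\mathbf{P}_{AB})=\mathbf{K}_A\mathbf{C}_A\mathbf{K}_A^\intercal+\mathbf{K}_A\mathbf{P}_{AB}\mathbf{K}_B^\intercal+\mathbf{K}_B\mathbf{P}_{AB}^\intercal\mathbf{K}_A^\intercal+\mathbf{K}_B\mathbf{C}_B\mathbf{K}_B^\intercal$ for $\mathbf{K}=(\mathbf{K}_A,\mathbf{K}_B)$. For $\mathbf{P}_{AB}\in\mathcal{A}_{\mathrm{Split}}$: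 $\mathbf{R}=\mathbf{C}_A+\mathbf{C}_B-\mathbf{P}_{AB}-\mathbf{P}_{AB}^\intercal$, $\mathbf{K}_A^*=(\mathbf{C}_B-\mathbf{P}_{AB}^\intercal)\mathbf{R}^{-1}$, $\mathbf{C}_F^*(\mathbf{P}_{AB})=\mathbf{C}_F((\mathbf{K}_A^*,\mathbf{I}-\mathbf{K}_A^* ),\mathbf{P}_{AB})$. For symmetric positive definite $\mathbf{P}$, $\mathcal{E}(\mathbf{P})=\{\mathbf{x}:\mathbf{x}^\intercal\mathbf{P}^{-1}\mathbf{x}\le1\}$. $\mathcal{V}^*=\bigcup_{\mathbf{P}_{AB}\in\mathcal{A}_{\mathrm{Split}}}\mathcal{E}(\mathbf{C}_F^*(\mathbf{P}_{AB}))$. An ellipsoid $\mathcal{E}(\mathbf{P})$ tightly circumscribes $\mathcal{V}^*$ if $\mathcal{V}^*\subseteq\mathcal{E}(\mathbf{P})$ and for every symmetric positive definite $\mathbf{Q}$, $\mathcal{V}^*\subseteq\mathcal{E}(\mathbf{Q})\subseteq\mathcal{E}(\mathbf{P})$ implies $\mathbf{Q}=\mathbf{P}$. *)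

theory Defs
  imports "HOL-Analysis.Analysis"
begin

definition sym_mat :: "real^'n^'n \<Rightarrow> bool" where
  "sym_mat A \<longleftrightarrow> transpose A = A"

definition spd :: "real^'n^'n \<Rightarrow> bool" where
  "spd A \<longleftrightarrow> sym_mat A \<and> (\<forall>x. x \<noteq> 0 \<longrightarrow> x \<bullet> (A *v x) > 0)"

text \<open>Block matrix [[PA, M],[M^T, PB]] is positive semidefinite: its quadratic
  form at the stacked vector (x,y) is nonnegative.\<close>
definition A_split :: "real^'n^'n \<Rightarrow> real^'n^'n \<Rightarrow> (real^'n^'n) set" where
  "A_split PA PB = {M. \<forall>x y. x \<bullet> (PA *v x) + x \<bullet> (M *v y) + y \<bullet> (transpose M *v x)
                              + y \<bullet> (PB *v y) \<ge> 0}"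

definition B_SCI :: "real^'n^'n \<Rightarrow> real^'n^'n \<Rightarrow> real^'n^'n \<Rightarrow> real^'n^'n \<Rightarrow> real \<Rightarrow> real^'n^'n" where
  "B_SCI PA PB QA QB \<omega> = matrix_inv
     (\<omega> *\<^sub>R matrix_inv (PA + \<omega> *\<^sub>R QA) + (1 - \<omega>) *\<^sub>R matrix_inv (PB + (1 - \<omega>) *\<^sub>R QB))"

definition C_F :: "real^'n^'n \<Rightarrow> real^'n^'n \<Rightarrow> real^'n^'n \<Rightarrow> real^'n^'n \<Rightarrow> real^'n^'n \<Rightarrow> real^'n^'n" where
  "C_F CA CB KA KB PAB =
     KA ** CA ** transpose KA + KA ** PAB ** transpose KB
     + KB ** transpose PAB ** transpose KA + KB ** CB ** transpose KB"

definition C_F_opt :: "real^'n^'n \<Rightarrow> real^'n^'n \<Rightarrow> real^'n^'n \<Rightarrow> real^'n^'n \<Rightarrow> real^'n^'n \<Rightarrow> real^'n^'n" where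
  "C_F_opt PA PB QA QB PAB =
     (let CA = PA + QA; CB = PB + QB;
          R = CA + CB - PAB - transpose PAB;
          KA = (CB - transpose PAB) ** matrix_inv R
      in C_F CA CB KA (mat 1 - KA) PAB)"

definition ellipsoid :: "real^'n^'n \<Rightarrow> (real^'n) set" where
  "ellipsoid P = {x. x \<bullet> (matrix_inv P *v x) \<le> 1}"

definition V_star :: "real^'n^'n \<Rightarrow> real^'n^'n \<Rightarrow> real^'n^'n \<Rightarrow> real^'n^'n \<Rightarrow> (real^'n) set" where
  "V_star PA PB QA QB = (\<Union>PAB \<in> A_split PA PB. ellipsoid (C_F_opt PA PB QA QB PAB))"

definition tightly_circumscribes :: "real^'n^'n \<Rightarrow> (real^'n) set \<Rightarrow> bool" where
  "tightly_circumscribes P V \<longleftrightarrow> V \<subseteq> ellipsoid P \<and>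
     (\<forall>Q. spd Q \<longrightarrow> V \<subseteq> ellipsoid Q \<longrightarrow> ellipsoid Q \<subseteq> ellipsoid P \<longrightarrow> Q = P)"

end

theory Submission
  imports Defs
begin


definition quad :: "('a::real_vector \<Rightarrow> real) \<Rightarrow> bool" where
  "quad f \<longleftrightarrow> (\<forall>x y s t. f (s *\<^sub>R x + t *\<^sub>R y) = s\<^sup>2 * f x + s * t * (f (x + y) - f x - f y) + t\<^sup>2 * f y)"

lemma quad_0: "quad f \<Longrightarrow> f 0 = 0"
  unfolding quad_def by (metis add_0 mult_zero_left power_zero_numeral scaleR_zero_left)

lemma quad_scale: "quad f \<Longrightarrow> f (s *\<^sub>R x) = s\<^sup>2 * f x"
  unfolding quad_def by (drule spec[of _ x], drule spec[of _ 0], drule spec[of _ s], drule spec[of _ 0]) (simp add: quad_0[unfolded quad_def])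

lemma quad_comb: "quad f \<Longrightarrow> f (s *\<^sub>R x + t *\<^sub>R y) = s\<^sup>2 * f x + s * t * (f (x + y) - f x - f y) + t\<^sup>2 * f y"
  unfolding quad_def by blast

lemma quad_lin: "quad f \<Longrightarrow> quad g \<Longrightarrow> quad (\<lambda>x. a * f x + b * g x)"
  unfolding quad_def
proof (intro allI)
  fix x y s t
  assume f: "\<forall>x y s t. f (s *\<^sub>R x + t *\<^sub>R y) = s\<^sup>2 * f x + s * t * (f (x + y) - f x - f y) + t\<^sup>2 * f y"
    and g: "\<forall>x y s t. g (s *\<^sub>R x + t *\<^sub>R y) = s\<^sup>2 * g x + s * t * (g (x + y) - g x - g y) + t\<^sup>2 * g y"
  show "a * f (s *\<^sub>R x + t *\<^sub>R y) + b * g (s *\<^sub>R x + t *\<^sub>R y) =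
    s\<^sup>2 * (a * f x + b * g x) + s * t * (a * f (x + y) + b * g (x + y) - (a * f x + b * g x) - (a * f y + b * g y)) + t\<^sup>2 * (a * f y + b * g y)"
    unfolding f[rule_format] g[rule_format] by (simp add: algebra_simps)
qed

lemma dines_convex:
  fixes f g :: "'a::real_vector \<Rightarrow> real"
  assumes qf: "quad f" and qg: "quad g"
    and V: "\<And>x y s t. x \<in> V \<Longrightarrow> y \<in> V \<Longrightarrow> s *\<^sub>R x + t *\<^sub>R y \<in> V"
  shows "convex ((\<lambda>x. (f x, g x)) ` V)"
  unfolding convex_def
proof (clarsimp)
  fix x y and u v :: real
  assume x: "x \<in> V" and y: "y \<in> V" and u: "0 \<le> u" and v: "0 \<le> v" and uv: "u + v = 1"
  define p1 where "p1 = u * f x + v * f y"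
  define p2 where "p2 = u * g x + v * g y"
  have sc: "\<And>c z. z \<in> V \<Longrightarrow> c *\<^sub>R z \<in> V"
    using V by (metis add.right_neutral scaleR_zero_left)
  have fs: "\<And>c z. f (c *\<^sub>R z) = c\<^sup>2 * f z" "\<And>c z. g (c *\<^sub>R z) = c\<^sup>2 * g z"
    using quad_scale qf qg by auto
  have goal: "\<exists>z\<in>V. f z = p1 \<and> g z = p2"
  proof -
    define d where "d = f x * g y - g x * f y"
    show ?thesis
    proof (cases "d = 0")
      case True
      show ?thesis
      proof (cases "f x = 0 \<and> g x = 0")
        case True
        then show ?thesis
          by (intro bexI[of _ "sqrt v *\<^sub>R y"]) (auto simp: fs p1_def p2_def v sc y)
      next
        case False
        obtain \<sigma> where \<sigma>: "f y = \<sigma> * f x" "g y = \<sigma> * g x"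
        proof (cases "f x = 0")
          case True
          with False have "g x \<noteq> 0" by auto
          with True \<open>d = 0\<close> show ?thesis
            by (intro that[of "g y / g x"]) (auto simp: d_def)
        next
          case False
          with \<open>d = 0\<close> show ?thesis
            by (intro that[of "f y / f x"]) (auto simp: d_def field_simps)
        qed
        define \<pi> where "\<pi> = u + v * \<sigma>"
        have pp: "p1 = \<pi> * f x" "p2 = \<pi> * g x"
          by (auto simp: p1_def p2_def \<pi>_def \<sigma> algebra_simps)
        show ?thesis
        proof (cases "\<pi> \<ge> 0")
          case True
          then show ?thesis
            by (intro bexI[of _ "sqrt \<pi> *\<^sub>R x"]) (auto simp: fs pp sc x)
        next
          case False
          then have "\<sigma> < 0" using u v unfolding \<pi>_def
            by (metis add_nonneg_nonneg mult_nonneg_nonneg not_le)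
          then have pos: "\<pi> / \<sigma> \<ge> 0" using False by (simp add: divide_nonpos_neg)
          have "p1 = (\<pi> / \<sigma>) * f y" "p2 = (\<pi> / \<sigma>) * g y"
            using \<open>\<sigma> < 0\<close> by (auto simp: pp \<sigma>)
          then show ?thesis using pos
            by (intro bexI[of _ "sqrt (\<pi>/\<sigma>) *\<^sub>R y"]) (auto simp: fs sc y)
        qed
      qed
    next
      case False
      define \<alpha> where "\<alpha> = (g y - g x) / d"
      define \<beta> where "\<beta> = (f x - f y) / d"
      define h where "h = (\<lambda>z. \<alpha> * f z + \<beta> * g z)"
      have qh: "quad h" unfolding h_def by (rule quad_lin[OF qf qg])
      have "h x = ((g y - g x) * f x + (f x - f y) * g x) / d"
        by (simp add: h_def \<alpha>_def \<beta>_def add_divide_distrib)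
      also have "(g y - g x) * f x + (f x - f y) * g x = d" by (simp add: d_def algebra_simps)
      finally have hx: "h x = 1" using False by simp
      have "h y = ((g y - g x) * f y + (f x - f y) * g y) / d"
        by (simp add: h_def \<alpha>_def \<beta>_def add_divide_distrib)
      also have "(g y - g x) * f y + (f x - f y) * g y = d" by (simp add: d_def algebra_simps)
      finally have hy: "h y = 1" using False by simp
      define cr where "cr = h (x + y) - h x - h y"
      define \<sigma> :: real where "\<sigma> = (if cr \<ge> 0 then 1 else -1)"
      define y' where "y' = \<sigma> *\<^sub>R y"
      have s2: "\<sigma>\<^sup>2 = 1" by (simp add: \<sigma>_def)
      have y'V: "y' \<in> V" using sc y y'_def by auto
      have fy': "f y' = f y" "g y' = g y" "h y' = h y"
        using s2 by (auto simp: y'_def fs quad_scale[OF qh])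
      have crp: "h (x + y') - h x - h y' \<ge> 0"
      proof -
        have "h (x + y') = h (1 *\<^sub>R x + \<sigma> *\<^sub>R y)" by (simp add: y'_def)
        also have "\<dots> = h x + \<sigma> * cr + h y"
          using quad_comb[OF qh, of 1 x \<sigma> y] s2 by (simp add: cr_def)
        finally show ?thesis using fy' by (auto simp: \<sigma>_def)
      qed
      define \<gamma> where "\<gamma> = (\<lambda>\<tau>::real. (1 - \<tau>) *\<^sub>R x + \<tau> *\<^sub>R y')"
      define cf where "cf = f (x + y') - f x - f y'"
      define cg where "cg = g (x + y') - g x - g y'"
      define ch where "ch = h (x + y') - h x - h y'"
      have f\<gamma>: "\<And>\<tau>. f (\<gamma> \<tau>) = (1-\<tau>)\<^sup>2 * f x + (1-\<tau>) * \<tau> * cf + \<tau>\<^sup>2 * f y"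
        unfolding \<gamma>_def cf_def using quad_comb[OF qf] fy' by simp
      have g\<gamma>: "\<And>\<tau>. g (\<gamma> \<tau>) = (1-\<tau>)\<^sup>2 * g x + (1-\<tau>) * \<tau> * cg + \<tau>\<^sup>2 * g y"
        unfolding \<gamma>_def cg_def using quad_comb[OF qg] fy' by simp
      have h\<gamma>: "\<And>\<tau>. h (\<gamma> \<tau>) = (1-\<tau>)\<^sup>2 + (1-\<tau>) * \<tau> * ch + \<tau>\<^sup>2"
        unfolding \<gamma>_def ch_def using quad_comb[OF qh] fy' hx hy by simp
      have chp: "ch \<ge> 0" using crp ch_def by simp
      define D where "D = (\<lambda>\<tau>. f (\<gamma> \<tau>) * p2 - g (\<gamma> \<tau>) * p1)"
      have contD: "continuous_on {0..1} D"
        unfolding D_def f\<gamma> g\<gamma> by (intro continuous_intros)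
      have D0: "D 0 = v * d" unfolding D_def f\<gamma> g\<gamma> p1_def p2_def d_def by (simp add: algebra_simps)
      have D1: "D 1 = - u * d" unfolding D_def f\<gamma> g\<gamma> p1_def p2_def d_def by (simp add: algebra_simps)
      obtain \<tau> where \<tau>: "0 \<le> \<tau>" "\<tau> \<le> 1" "D \<tau> = 0"
      proof (cases "d > 0")
        case True
        have "D 1 \<le> 0" "0 \<le> D 0" using True u v D0 D1 by auto
        from IVT2'[OF this _ contD] that show ?thesis by auto
      next
        case False
        have "D 0 \<le> 0" "0 \<le> D 1" using False u v D0 D1
          by (auto simp: mult_nonneg_nonpos)
        from IVT'[OF this _ contD] that show ?thesis by auto
      qed
      define q1 where "q1 = f (\<gamma> \<tau>)"
      define q2 where "q2 = g (\<gamma> \<tau>)"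
      define r where "r = h (\<gamma> \<tau>)"
      have rpos: "r > 0"
      proof -
        have "(1-\<tau>)\<^sup>2 + \<tau>\<^sup>2 > 0"
          by (cases "\<tau> = 0") (auto simp: add_nonneg_pos)
        moreover have "(1-\<tau>) * \<tau> * ch \<ge> 0" using \<tau> chp by simp
        ultimately show ?thesis unfolding r_def h\<gamma> by linarith
      qed
      have rq: "r = \<alpha> * q1 + \<beta> * q2" by (simp add: r_def h_def q1_def q2_def)
      have hp: "\<alpha> * p1 + \<beta> * p2 = 1"
      proof -
        have "\<alpha> * p1 + \<beta> * p2 = u * h x + v * h y" by (simp add: p1_def p2_def h_def algebra_simps)
        then show ?thesis using hx hy uv by simp
      qed
      have par: "q1 * p2 = q2 * p1" using \<tau>(3) by (simp add: D_def q1_def q2_def)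
      have qrp: "q1 = r * p1 \<and> q2 = r * p2"
      proof (cases "p1 = 0")
        case True
        then have "p2 \<noteq> 0" using hp by auto
        then show ?thesis using True par rq hp
          by (metis (no_types, lifting) add_0 mult_cancel_right mult_eq_0_iff mult.assoc mult.commute mult_1)
      next
        case False
        have "q2 = q1 * p2 / p1" using par False by (simp add: field_simps)
        then have "r = q1 / p1 * (\<alpha> * p1 + \<beta> * p2)" using rq False by (simp add: field_simps)
        then have "r = q1 / p1" using hp by simp
        then have q1e: "q1 = r * p1" using False by (simp add: field_simps)
        have "p1 * q2 = p2 * q1" using par by (simp only: mult.commute)
        also have "\<dots> = p1 * (r * p2)" unfolding q1e by simp
        finally have "p1 * q2 = p1 * (r * p2)" .
        then have "q2 = r * p2" using False by (metis mult_left_cancel)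
        then show ?thesis using q1e by simp
      qed
      have gV: "\<gamma> \<tau> \<in> V" unfolding \<gamma>_def using V x y'V by blast
      show ?thesis
      proof (intro bexI[of _ "(1 / sqrt r) *\<^sub>R \<gamma> \<tau>"] conjI)
        show "(1 / sqrt r) *\<^sub>R \<gamma> \<tau> \<in> V" using sc gV by blast
        show "f ((1 / sqrt r) *\<^sub>R \<gamma> \<tau>) = p1"
          using rpos qrp by (simp add: fs power_divide q1_def)
        show "g ((1 / sqrt r) *\<^sub>R \<gamma> \<tau>) = p2"
          using rpos qrp by (simp add: fs power_divide q2_def)
      qed
    qed
  qed
  then show "(u * f x + v * f y, u * g x + v * g y) \<in> (\<lambda>x. (f x, g x)) ` V"
    unfolding p1_def p2_def image_iff by (metis (no_types, lifting))
qed

lemma yuan: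
  fixes f g :: "'a::real_vector \<Rightarrow> real"
  assumes qf: "quad f" and qg: "quad g"
    and V: "\<And>x y s t. x \<in> V \<Longrightarrow> y \<in> V \<Longrightarrow> s *\<^sub>R x + t *\<^sub>R y \<in> V"
    and V0: "0 \<in> V"
    and mx: "\<And>x. x \<in> V \<Longrightarrow> max (f x) (g x) \<ge> 0"
  shows "\<exists>l. 0 \<le> l \<and> l \<le> 1 \<and> (\<forall>x\<in>V. 0 \<le> l * f x + (1 - l) * g x)"
proof -
  define K where "K = (\<lambda>x. (f x, g x)) ` V"
  define T where "T = {z::real\<times>real. fst z < 0 \<and> snd z < 0}"
  have cK: "convex K" unfolding K_def by (rule dines_convex[OF qf qg V])
  have T_eq: "T = {z. inner (1::real,0::real) z < 0} \<inter> {z. inner (0::real,1::real) z < 0}"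
    unfolding T_def by auto
  have cT: "convex T" unfolding T_eq by (intro convex_Int convex_halfspace_lt)
  have K0: "(0,0) \<in> K" unfolding K_def using V0 quad_0[OF qf] quad_0[OF qg] by force
  have Tne: "(-1,-1) \<in> T" unfolding T_def by simp
  have disj: "K \<inter> T = {}"
    using mx unfolding K_def T_def by fastforce
  obtain a b where a: "a \<noteq> 0" and aK: "\<forall>x\<in>K. inner a x \<le> b" and aT: "\<forall>x\<in>T. b \<le> inner a x"
    using separating_hyperplane_sets[OF cK cT _ _ disj] K0 Tne by blast
  obtain a1 a2 where a12: "a = (a1, a2)" by (cases a)
  have b0: "0 \<le> b" using aK K0 a12 by fastforce
  have t1: "\<And>e. e > 0 \<Longrightarrow> b \<le> - a1 - e * a2"
  proof -
    fix e :: real assume "e > 0"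
    then have "(-1, -e) \<in> T" unfolding T_def by simp
    then have "b \<le> inner a (-1, -e)" using aT by blast
    then show "b \<le> - a1 - e * a2" using a12 by (simp add: algebra_simps)
  qed
  have t2: "\<And>e. e > 0 \<Longrightarrow> b \<le> - e * a1 - a2"
  proof -
    fix e :: real assume "e > 0"
    then have "(-e, -1) \<in> T" unfolding T_def by simp
    then have "b \<le> inner a (-e, -1)" using aT by blast
    then show "b \<le> - e * a1 - a2" using a12 by (simp add: algebra_simps)
  qed
  have a1n: "a1 \<le> 0"
  proof (rule ccontr)
    assume "\<not> a1 \<le> 0"
    then have a1p: "a1 > 0" by simp
    show False
    proof (cases "a2 \<ge> 0")
      case True
      then show False using t1[of 1] b0 a1p by simp
    next
      case False
      define e where "e = a1 / (- 2 * a2)"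
      have ep: "e > 0" using False a1p unfolding e_def by (intro divide_pos_pos) auto
      have "e * a2 = - a1 / 2" using False by (simp add: e_def field_simps)
      then show False using t1[OF ep] b0 a1p by simp
    qed
  qed
  have a2n: "a2 \<le> 0"
  proof (rule ccontr)
    assume "\<not> a2 \<le> 0"
    then have a2p: "a2 > 0" by simp
    show False
    proof (cases "a1 \<ge> 0")
      case True
      then show False using t2[of 1] b0 a2p by simp
    next
      case False
      define e where "e = a2 / (- 2 * a1)"
      have ep: "e > 0" using False a2p unfolding e_def by (intro divide_pos_pos) auto
      have "e * a1 = - a2 / 2" using False by (simp add: e_def field_simps)
      then show False using t2[OF ep] b0 a2p by simp
    qed
  qed
  have "a1 \<noteq> 0 \<or> a2 \<noteq> 0" using a a12 by (auto simp: zero_prod_def)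
  then have sneg: "a1 + a2 < 0" using a1n a2n by auto
  have wn: "\<And>x. x \<in> V \<Longrightarrow> a1 * f x + a2 * g x \<le> 0"
  proof (rule ccontr)
    fix x assume x: "x \<in> V" and "\<not> a1 * f x + a2 * g x \<le> 0"
    then have wp: "a1 * f x + a2 * g x > 0" by simp
    define c where "c = sqrt ((b + 1) / (a1 * f x + a2 * g x))"
    have c2: "c\<^sup>2 = (b + 1) / (a1 * f x + a2 * g x)" unfolding c_def using wp b0 by simp
    have "c *\<^sub>R x \<in> V" using V[OF x V0, of c 0] by simp
    then have "(f (c *\<^sub>R x), g (c *\<^sub>R x)) \<in> K" unfolding K_def by blast
    then have "inner a (f (c *\<^sub>R x), g (c *\<^sub>R x)) \<le> b" using aK by blast
    then have "a1 * f (c *\<^sub>R x) + a2 * g (c *\<^sub>R x) \<le> b" using a12 by simp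
    then have "c\<^sup>2 * (a1 * f x + a2 * g x) \<le> b"
      by (simp add: quad_scale[OF qf] quad_scale[OF qg] algebra_simps)
    then show False using c2 wp by simp
  qed
  define l where "l = a1 / (a1 + a2)"
  have l0: "0 \<le> l" unfolding l_def using a1n sneg by (simp add: divide_nonpos_neg)
  have l1: "l \<le> 1" unfolding l_def using a2n sneg by (simp add: divide_le_eq)
  have "\<forall>x\<in>V. 0 \<le> l * f x + (1 - l) * g x"
  proof
    fix x assume x: "x \<in> V"
    have "1 - l = a2 / (a1 + a2)" unfolding l_def using sneg by (simp add: field_simps)
    then have "l * f x + (1 - l) * g x = (a1 * f x + a2 * g x) / (a1 + a2)"
      unfolding l_def by (simp add: add_divide_distrib)
    then show "0 \<le> l * f x + (1 - l) * g x" using wn[OF x] sneg by (simp add: divide_nonpos_neg)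
  qed
  then show ?thesis using l0 l1 by blast
qed



definition qf :: "real^'n^'n \<Rightarrow> real^'n \<Rightarrow> real" where
  "qf A x = x \<bullet> (A *v x)"

lemma tdot: "y \<bullet> (transpose M *v x) = x \<bullet> (M *v y)"
  for M :: "real^'n^'n"
  by (simp add: dot_lmul_matrix[symmetric] inner_commute)

lemma sym_dot: "sym_mat A \<Longrightarrow> x \<bullet> (A *v y) = y \<bullet> (A *v x)"
  unfolding sym_mat_def using tdot[of y A x] by simp

lemma transpose_add: "transpose (A + B) = transpose A + transpose (B::real^'n^'n)"
  by (simp add: transpose_def vec_eq_iff)

lemma transpose_diff: "transpose (A - B) = transpose A - transpose (B::real^'n^'n)"
  by (simp add: transpose_def vec_eq_iff)

lemma qf_add: "sym_mat A \<Longrightarrow> qf A (x + y) = qf A x + 2 * (x \<bullet> (A *v y)) + qf A y"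
  unfolding qf_def by (simp add: algebra_simps inner_add_left inner_add_right sym_dot[of A y x])

lemma qf_diff: "sym_mat A \<Longrightarrow> qf A (x - y) = qf A x - 2 * (x \<bullet> (A *v y)) + qf A y"
  unfolding qf_def by (simp add: algebra_simps inner_diff_left inner_diff_right sym_dot[of A y x])

lemma qf_scale: "qf A (c *\<^sub>R x) = c\<^sup>2 * qf A x"
  unfolding qf_def by (simp add: matrix_vector_mult_scaleR power2_eq_square)

lemma qf_0[simp]: "qf A 0 = 0" unfolding qf_def by simp

lemma qf_madd: "qf (A + B) x = qf A x + qf B x"
  unfolding qf_def by (simp add: matrix_vector_mult_add_rdistrib inner_add_right)

lemma qf_msc: "qf (c *\<^sub>R A) x = c * qf A x"
  unfolding qf_def by (simp add: scaleR_matrix_vector_assoc[symmetric])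

lemma inv_ex: "invertible A \<Longrightarrow> A ** matrix_inv A = mat 1 \<and> matrix_inv A ** A = mat 1"
  for A :: "real^'n^'n"
  unfolding invertible_def matrix_inv_def by (rule someI_ex)

lemma inv_mv1: "invertible A \<Longrightarrow> A *v (matrix_inv A *v x) = x"
  for A :: "real^'n^'n"
  by (simp add: matrix_vector_mul_assoc inv_ex)

lemma inv_mv2: "invertible A \<Longrightarrow> matrix_inv A *v (A *v x) = x"
  for A :: "real^'n^'n"
  by (simp add: matrix_vector_mul_assoc inv_ex)

lemma pd_invertible:
  fixes A :: "real^'n^'n"
  assumes "\<And>x. x \<noteq> 0 \<Longrightarrow> 0 < qf A x"
  shows "invertible A"
proof -
  have "\<forall>x. A *v x = 0 \<longrightarrow> x = 0"
    using assms unfolding qf_def by (metis inner_zero_right less_irrefl)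
  then show ?thesis
    unfolding invertible_left_inverse matrix_left_invertible_ker .
qed

lemma spd_pos: "spd A \<Longrightarrow> x \<noteq> 0 \<Longrightarrow> 0 < qf A x"
  unfolding spd_def qf_def by blast

lemma spd_psd: "spd A \<Longrightarrow> 0 \<le> qf A x"
  using spd_pos[of A x] by (cases "x = 0") auto

lemma spd_sym: "spd A \<Longrightarrow> sym_mat A"
  unfolding spd_def by blast

lemma spd_invertible: "spd A \<Longrightarrow> invertible A"
  by (rule pd_invertible) (rule spd_pos)

lemma spdI: "sym_mat A \<Longrightarrow> (\<And>x. x \<noteq> 0 \<Longrightarrow> 0 < qf A x) \<Longrightarrow> spd A"
  unfolding spd_def qf_def by blast

lemma inv_inv:
  fixes A :: "real^'n^'n"
  assumes "invertible A"
  shows "matrix_inv (matrix_inv A) = A"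
proof -
  have iA: "invertible (matrix_inv A)"
    using inv_ex[OF assms] unfolding invertible_def by blast
  have "matrix_inv (matrix_inv A) = matrix_inv (matrix_inv A) ** (matrix_inv A ** A)"
    using inv_ex[OF assms] by simp
  also have "\<dots> = A" using inv_ex[OF iA] by (simp add: matrix_mul_assoc)
  finally show ?thesis .
qed

lemma sym_inv:
  fixes A :: "real^'n^'n"
  assumes "sym_mat A" "invertible A"
  shows "sym_mat (matrix_inv A)"
proof -
  have "transpose (matrix_inv A) ** A = mat 1"
    using inv_ex[OF assms(2)] assms(1) unfolding sym_mat_def
    by (metis matrix_transpose_mul transpose_mat)
  then have "transpose (matrix_inv A) = transpose (matrix_inv A) ** (A ** matrix_inv A)"
    using inv_ex[OF assms(2)] by simp
  also have "\<dots> = matrix_inv A"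
    by (simp add: matrix_mul_assoc \<open>transpose (matrix_inv A) ** A = mat 1\<close>)
  finally show ?thesis unfolding sym_mat_def .
qed

lemma spd_inv:
  fixes A :: "real^'n^'n"
  assumes "spd A"
  shows "spd (matrix_inv A)"
proof (rule spdI)
  have iA: "invertible A" using spd_invertible[OF assms] .
  show "sym_mat (matrix_inv A)" using sym_inv[OF spd_sym[OF assms] iA] .
  fix x :: "real^'n" assume x: "x \<noteq> 0"
  define y where "y = matrix_inv A *v x"
  have "y \<noteq> 0" using x inv_mv1[OF iA, of x] unfolding y_def by auto
  then have "0 < qf A y" using spd_pos[OF assms] by blast
  also have "qf A y = qf (matrix_inv A) x"
    unfolding qf_def y_def inv_mv1[OF iA] by (simp add: inner_commute)
  finally show "0 < qf (matrix_inv A) x" .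
qed

lemma VAR:
  fixes C :: "real^'n^'n"
  assumes "invertible C" "\<And>y. 2 * (y \<bullet> x) - qf C y \<le> r"
  shows "qf (matrix_inv C) x \<le> r"
proof -
  have "2 * ((matrix_inv C *v x) \<bullet> x) - qf C (matrix_inv C *v x) = qf (matrix_inv C) x"
    unfolding qf_def inv_mv1[OF assms(1)] by (simp add: inner_commute)
  then show ?thesis using assms(2)[of "matrix_inv C *v x"] by simp
qed

lemma VAR2:
  fixes C :: "real^'n^'n"
  assumes "sym_mat C" "invertible C" "\<And>v. 0 \<le> qf C v"
  shows "2 * (y \<bullet> x) - qf C y \<le> qf (matrix_inv C) x"
proof -
  define w where "w = matrix_inv C *v x"
  have "0 \<le> qf C (y - w)" using assms(3) .
  also have "qf C (y - w) = qf C y - 2 * (y \<bullet> x) + qf (matrix_inv C) x"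
    unfolding qf_diff[OF assms(1)] unfolding w_def qf_def inv_mv1[OF assms(2)]
    by (simp add: inner_commute)
  finally show ?thesis by simp
qed

lemma discr:
  fixes X U c :: real
  assumes "\<And>s. 0 \<le> X - 2 * s * c + s\<^sup>2 * U"
  shows "c\<^sup>2 \<le> X * U"
proof (cases "U = 0")
  case True
  have X0: "0 \<le> X" using assms[of 0] by simp
  have "c = 0"
  proof (rule ccontr)
    assume "c \<noteq> 0"
    then have "0 \<le> X - 2 * ((X + 1) / (2 * c)) * c" using assms[of "(X + 1) / (2 * c)"] True by simp
    also have "\<dots> = -1" using \<open>c \<noteq> 0\<close> by (simp add: field_simps)
    finally show False by simp
  qed
  then show ?thesis using True by simp
next
  case False
  have U0: "U \<ge> 0"
  proof (rule ccontr)
    assume "\<not> U \<ge> 0"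
    then have Un: "U < 0" by simp
    have X0: "0 \<le> X" using assms[of 0] by simp
    define s where "s = sqrt ((X + 1) / (- U))"
    have "(X + 1) / (- U) \<ge> 0" using Un X0 by (intro divide_nonneg_pos) auto
    then have s2: "s\<^sup>2 = (X + 1) / (- U)" unfolding s_def by simp
    have "0 \<le> X - 2 * s * c + s\<^sup>2 * U" "0 \<le> X - 2 * (-s) * c + (-s)\<^sup>2 * U" by (rule assms)+
    then have "0 \<le> X + s\<^sup>2 * U" by simp
    also have "s\<^sup>2 * U = - (X + 1)" unfolding s2 using Un by (simp add: field_simps)
    finally show False by simp
  qed
  with False have Up: "U > 0" by simp
  have "0 \<le> X - 2 * (c / U) * c + (c / U)\<^sup>2 * U" by (rule assms)
  also have "\<dots> = X - c\<^sup>2 / U" using Up by (simp add: field_simps power2_eq_square)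
  finally show ?thesis using Up by (simp add: field_simps)
qed

lemma CS:
  fixes A :: "real^'n^'n"
  assumes "sym_mat A" "\<And>v. 0 \<le> qf A v"
  shows "(x \<bullet> (A *v u))\<^sup>2 \<le> qf A x * qf A u"
proof (rule discr)
  fix s
  have "0 \<le> qf A (x - s *\<^sub>R u)" by (rule assms(2))
  also have "\<dots> = qf A x - 2 * s * (x \<bullet> (A *v u)) + s\<^sup>2 * qf A u"
    unfolding qf_diff[OF assms(1)] qf_scale by (simp add: matrix_vector_mult_scaleR)
  finally show "0 \<le> qf A x - 2 * s * (x \<bullet> (A *v u)) + s\<^sup>2 * qf A u" .
qed



declare transpose_matrix_vector [simp del]

lemma mv_neg: "A *v (- x) = - (A *v (x::real^'n))" for A :: "real^'n^'n"
  using matrix_vector_mult_scaleR[of A "-1" x] by simp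

lemma Asplit_ineq:
  assumes "M \<in> A_split PA PB"
  shows "0 \<le> qf PA x + 2 * (x \<bullet> (M *v y)) + qf PB y"
proof -
  have "0 \<le> x \<bullet> (PA *v x) + x \<bullet> (M *v y) + y \<bullet> (transpose M *v x) + y \<bullet> (PB *v y)"
    using assms unfolding A_split_def by blast
  then show ?thesis unfolding tdot qf_def by simp
qed

definition Ff :: "real^'n^'n \<Rightarrow> real^'n^'n \<Rightarrow> real^'n^'n \<Rightarrow> real^'n^'n \<Rightarrow> real^'n^'n \<Rightarrow> real^'n \<Rightarrow> real^'n \<Rightarrow> real" where
  "Ff PA PB QA QB M y a = qf (PA + QA) a + 2 * (a \<bullet> (M *v (y - a))) + qf (PB + QB) (y - a)"

lemma term_qf: "y \<bullet> ((X ** Y ** transpose Z) *v y) = (transpose X *v y) \<bullet> (Y *v (transpose Z *v y))"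
  for X Y Z :: "real^'n^'n"
proof -
  have "(X ** Y ** transpose Z) *v y = X *v (Y *v (transpose Z *v y))"
    by (simp add: matrix_vector_mul_assoc matrix_mul_assoc)
  then show ?thesis using tdot[of "Y *v (transpose Z *v y)" X y] by (simp add: inner_commute)
qed

lemma CF_qf:
  fixes CA CB KA KB M :: "real^'n^'n"
  shows "qf (C_F CA CB KA KB M) y =
    qf CA (transpose KA *v y) + 2 * ((transpose KA *v y) \<bullet> (M *v (transpose KB *v y))) + qf CB (transpose KB *v y)"
proof -
  have "qf (C_F CA CB KA KB M) y = y \<bullet> ((KA ** CA ** transpose KA) *v y) + y \<bullet> ((KA ** M ** transpose KB) *v y)
     + y \<bullet> ((KB ** transpose M ** transpose KA) *v y) + y \<bullet> ((KB ** CB ** transpose KB) *v y)"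
    unfolding C_F_def qf_def by (simp add: matrix_vector_mult_add_rdistrib inner_add_right)
  also have "\<dots> = qf CA (transpose KA *v y) + 2 * ((transpose KA *v y) \<bullet> (M *v (transpose KB *v y))) + qf CB (transpose KB *v y)"
    unfolding term_qf qf_def tdot by simp
  finally show ?thesis .
qed

lemma R_facts:
  fixes PA PB QA QB M :: "real^'n^'n"
  assumes spd: "spd PA" "spd PB" "spd QA" "spd QB" and M: "M \<in> A_split PA PB"
  defines "R \<equiv> PA + QA + (PB + QB) - M - transpose M"
  shows "spd R"
proof (rule spdI)
  show "sym_mat R" using spd unfolding R_def spd_def sym_mat_def
    by (simp add: transpose_add transpose_diff algebra_simps)
  fix v :: "real^'n" assume v: "v \<noteq> 0"
  have "qf (transpose M) v = qf M v" unfolding qf_def tdot by simp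
  have e: "qf R v = (qf PA v + 2 * (v \<bullet> (M *v (- v))) + qf PB (- v)) + qf QA v + qf QB v"
    unfolding R_def qf_def
    by (simp add: matrix_vector_mult_add_rdistrib matrix_vector_mult_diff_rdistrib inner_add_right inner_diff_right tdot mv_neg)
  have "0 \<le> qf PA v + 2 * (v \<bullet> (M *v (- v))) + qf PB (- v)" by (rule Asplit_ineq[OF M])
  moreover have "0 < qf QA v" "0 < qf QB v" using spd_pos spd v by auto
  ultimately show "0 < qf R v" unfolding e by linarith
qed

lemma Ff_lower:
  assumes spd: "spd QA" "spd QB" and M: "M \<in> A_split PA PB"
  shows "qf QA a + qf QB (y - a) \<le> Ff PA PB QA QB M y a"
proof -
  have "0 \<le> qf PA a + 2 * (a \<bullet> (M *v (y - a))) + qf PB (y - a)" by (rule Asplit_ineq[OF M])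
  then show ?thesis unfolding Ff_def qf_madd by linarith
qed

lemma Ff_R:
  fixes PA PB QA QB M :: "real^'n^'n"
  assumes sPB: "sym_mat PB" and sQB: "sym_mat QB"
  shows "Ff PA PB QA QB M y a = qf (PA + QA + (PB + QB) - M - transpose M) a
      - 2 * (a \<bullet> (((PB + QB) - M) *v y)) + qf (PB + QB) y"
proof -
  have sCB: "sym_mat (PB + QB)" using sPB sQB unfolding sym_mat_def by (simp add: transpose_add)
  have s1: "y \<bullet> (PB *v a) = a \<bullet> (PB *v y)" "y \<bullet> (QB *v a) = a \<bullet> (QB *v y)"
    using sym_dot[OF sPB] sym_dot[OF sQB] by auto
  show ?thesis
    unfolding Ff_def qf_diff[OF sCB]
    unfolding qf_def
    by (simp add: matrix_vector_mult_add_rdistrib matrix_vector_mult_diff_rdistrib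
        matrix_vector_mult_diff_distrib inner_add_right inner_diff_right inner_diff_left tdot s1 algebra_simps)
qed

lemma quad_min:
  fixes R :: "real^'n^'n"
  assumes "sym_mat R" "\<And>v. 0 \<le> qf R v" "R *v a0 = w"
  shows "qf R a0 - 2 * (a0 \<bullet> w) \<le> qf R a - 2 * (a \<bullet> w)"
proof -
  have "0 \<le> qf R (a - a0)" by (rule assms(2))
  also have "\<dots> = qf R a - 2 * (a \<bullet> w) + a0 \<bullet> w"
    unfolding qf_diff[OF assms(1)] by (simp add: assms(3) qf_def)
  finally show ?thesis by (simp add: qf_def assms(3))
qed

lemma Copt_facts:
  fixes PA PB QA QB M :: "real^'n^'n" and y :: "real^'n"
  assumes spd: "spd PA" "spd PB" "spd QA" "spd QB" and M: "M \<in> A_split PA PB"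
  defines "R \<equiv> PA + QA + (PB + QB) - M - transpose M"
  defines "as \<equiv> matrix_inv R *v (((PB + QB) - M) *v y)"
  shows "qf (C_F_opt PA PB QA QB M) y = Ff PA PB QA QB M y as"
    and "\<And>a. qf (C_F_opt PA PB QA QB M) y \<le> Ff PA PB QA QB M y a"
proof -
  have sR: "spd R" unfolding R_def by (rule R_facts[OF spd M])
  have iR: "invertible R" by (rule spd_invertible[OF sR])
  have sCB: "sym_mat (PB + QB)" using spd unfolding spd_def sym_mat_def by (simp add: transpose_add)
  have symiR: "transpose (matrix_inv R) = matrix_inv R"
    using sym_inv[OF spd_sym[OF sR] iR] unfolding sym_mat_def .
  define KA where "KA = (PB + QB - transpose M) ** matrix_inv R"
  have tKA: "transpose KA *v y = as"
    unfolding KA_def as_def matrix_transpose_mul symiR transpose_diff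
    using sCB unfolding sym_mat_def by (simp add: matrix_vector_mul_assoc)
  have tKB: "transpose (mat 1 - KA) *v y = y - as"
    by (simp add: transpose_diff matrix_vector_mult_diff_rdistrib tKA)
  have C: "C_F_opt PA PB QA QB M = C_F (PA + QA) (PB + QB) KA (mat 1 - KA) M"
    unfolding C_F_opt_def KA_def R_def Let_def by simp
  show e: "qf (C_F_opt PA PB QA QB M) y = Ff PA PB QA QB M y as"
    unfolding C CF_qf tKA tKB Ff_def ..
  fix a
  have "R *v as = ((PB + QB) - M) *v y" unfolding as_def by (rule inv_mv1[OF iR])
  from quad_min[OF spd_sym[OF sR] spd_psd[OF sR] this, of a]
  show "qf (C_F_opt PA PB QA QB M) y \<le> Ff PA PB QA QB M y a"
    unfolding e Ff_R[OF spd_sym[OF spd(2)] spd_sym[OF spd(4)]] R_def by simp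
qed

lemma Copt_spd:
  fixes PA PB QA QB M :: "real^'n^'n"
  assumes spd: "spd PA" "spd PB" "spd QA" "spd QB" and M: "M \<in> A_split PA PB"
  shows "spd (C_F_opt PA PB QA QB M)"
proof (rule spdI)
  define R where "R = PA + QA + (PB + QB) - M - transpose M"
  have sR: "spd R" unfolding R_def by (rule R_facts[OF spd M])
  have iR: "invertible R" by (rule spd_invertible[OF sR])
  have symiR: "transpose (matrix_inv R) = matrix_inv R"
    using sym_inv[OF spd_sym[OF sR] iR] unfolding sym_mat_def .
  have sA: "transpose PA = PA" "transpose QA = QA" and sB: "transpose PB = PB" "transpose QB = QB"
    using spd unfolding spd_def sym_mat_def by simp_all
  define KA where "KA = (PB + QB - transpose M) ** matrix_inv R"
  have C: "C_F_opt PA PB QA QB M = C_F (PA + QA) (PB + QB) KA (mat 1 - KA) M"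
    unfolding C_F_opt_def KA_def R_def Let_def by simp
  show "sym_mat (C_F_opt PA PB QA QB M)"
    unfolding C C_F_def sym_mat_def
    by (simp add: transpose_add matrix_transpose_mul sA sB matrix_mul_assoc algebra_simps)
  fix y :: "real^'n" assume y: "y \<noteq> 0"
  define as where "as = matrix_inv R *v (((PB + QB) - M) *v y)"
  have "qf (C_F_opt PA PB QA QB M) y = Ff PA PB QA QB M y as"
    unfolding as_def R_def by (rule Copt_facts(1)[OF spd M])
  moreover have "qf QA as + qf QB (y - as) \<le> Ff PA PB QA QB M y as"
    by (rule Ff_lower[OF spd(3,4) M])
  moreover have "0 < qf QA as + qf QB (y - as)"
  proof (cases "as = 0")
    case True then show ?thesis using spd_pos[OF spd(4) y] by simp
  next
    case False then show ?thesis using spd_pos[OF spd(3) False] spd_psd[OF spd(4)]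
      by (simp add: add_pos_nonneg)
  qed
  ultimately show "0 < qf (C_F_opt PA PB QA QB M) y" by linarith
qed



declare transpose_matrix_vector [simp del]

lemma spd_comb:
  fixes P Q :: "real^'n^'n"
  assumes "spd P" "spd Q" "0 \<le> c"
  shows "spd (P + c *\<^sub>R Q)"
proof (rule spdI)
  show "sym_mat (P + c *\<^sub>R Q)" using assms unfolding spd_def sym_mat_def
    by (simp add: transpose_add transpose_scalar)
  fix x :: "real^'n" assume "x \<noteq> 0"
  then show "0 < qf (P + c *\<^sub>R Q) x" unfolding qf_madd qf_msc
    using spd_pos[OF assms(1)] spd_psd[OF assms(2)] assms(3)
    by (simp add: add_pos_nonneg)
qed

lemma spd_G:
  fixes X Y :: "real^'n^'n"
  assumes "spd X" "spd Y" "0 \<le> l" "l \<le> 1"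
  shows "spd (l *\<^sub>R X + (1 - l) *\<^sub>R Y)"
proof (rule spdI)
  show "sym_mat (l *\<^sub>R X + (1 - l) *\<^sub>R Y)" using assms unfolding spd_def sym_mat_def
    by (simp add: transpose_add transpose_scalar)
  fix x :: "real^'n" assume x: "x \<noteq> 0"
  have a: "0 < qf X x" "0 < qf Y x" using spd_pos assms x by auto
  show "0 < qf (l *\<^sub>R X + (1 - l) *\<^sub>R Y) x" unfolding qf_madd qf_msc
  proof (cases "l = 0")
    case True then show "0 < l * qf X x + (1 - l) * qf Y x" using a by simp
  next
    case False then show "0 < l * qf X x + (1 - l) * qf Y x" using a assms(3,4)
      by (simp add: add_pos_nonneg)
  qed
qed

lemma G_mv: "(l *\<^sub>R X + (1 - l) *\<^sub>R Y) *v z = l *\<^sub>R (X *v z) + (1 - l) *\<^sub>R (Y *v z)"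
  for X Y :: "real^'n^'n"
  by (simp add: matrix_vector_mult_add_rdistrib scaleR_matrix_vector_assoc)

lemma step6:
  fixes PA PB QA QB M :: "real^'n^'n"
  assumes spd: "spd PA" "spd PB" "spd QA" "spd QB" and M: "M \<in> A_split PA PB"
    and l: "0 \<le> l" "l \<le> 1"
  defines "G \<equiv> l *\<^sub>R matrix_inv (PA + l *\<^sub>R QA) + (1 - l) *\<^sub>R matrix_inv (PB + (1 - l) *\<^sub>R QB)"
  shows "qf G x \<le> qf (matrix_inv (C_F_opt PA PB QA QB M)) x"
proof -
  define XA where "XA = matrix_inv (PA + l *\<^sub>R QA)"
  define XB where "XB = matrix_inv (PB + (1 - l) *\<^sub>R QB)"
  have sA: "spd (PA + l *\<^sub>R QA)" by (rule spd_comb) (use spd l in auto)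
  have sB: "spd (PB + (1 - l) *\<^sub>R QB)" by (rule spd_comb) (use spd l in auto)
  have iA: "invertible (PA + l *\<^sub>R QA)" by (rule spd_invertible[OF sA])
  have iB: "invertible (PB + (1 - l) *\<^sub>R QB)" by (rule spd_invertible[OF sB])
  define C where "C = C_F_opt PA PB QA QB M"
  have sC: "spd C" unfolding C_def by (rule Copt_spd[OF spd M])
  have key: "qf C (G *v z) \<le> qf G z" for z
  proof -
    define a where "a = XA *v z"
    define b where "b = XB *v z"
    have Gz: "G *v z = l *\<^sub>R a + (1 - l) *\<^sub>R b"
      unfolding G_def a_def b_def XA_def XB_def by (rule G_mv)
    have "qf C (G *v z) \<le> Ff PA PB QA QB M (G *v z) (l *\<^sub>R a)"
      unfolding C_def by (rule Copt_facts(2)[OF spd M])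
    also have "\<dots> = l\<^sup>2 * (qf PA a + qf QA a) + 2 * (l * (1 - l)) * (a \<bullet> (M *v b)) + (1 - l)\<^sup>2 * (qf PB b + qf QB b)"
    proof -
      have d: "G *v z - l *\<^sub>R a = (1 - l) *\<^sub>R b" unfolding Gz by simp
      show ?thesis unfolding Ff_def d qf_madd qf_scale matrix_vector_mult_scaleR inner_scaleR_left inner_scaleR_right
        by (simp add: algebra_simps power2_eq_square)
    qed
    also have "\<dots> \<le> l * (qf PA a + l * qf QA a) + (1 - l) * (qf PB b + (1 - l) * qf QB b)"
    proof -
      have "0 \<le> qf PA a + 2 * (a \<bullet> (M *v (- b))) + qf PB (- b)" by (rule Asplit_ineq[OF M])
      then have h: "0 \<le> qf PA a - 2 * (a \<bullet> (M *v b)) + qf PB b"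
        using qf_scale[of PB "-1" b] by (simp add: mv_neg)
      have "0 \<le> l * (1 - l)" using l by simp
      from mult_nonneg_nonneg[OF this h] show ?thesis by (simp add: algebra_simps power2_eq_square)
    qed
    also have "\<dots> = qf G z"
    proof -
      have ea: "(PA + l *\<^sub>R QA) *v a = z" unfolding a_def XA_def by (rule inv_mv1[OF iA])
      have eb: "(PB + (1 - l) *\<^sub>R QB) *v b = z" unfolding b_def XB_def by (rule inv_mv1[OF iB])
      have "qf G z = l * (a \<bullet> z) + (1 - l) * (b \<bullet> z)"
        unfolding G_def qf_def a_def b_def XA_def XB_def G_mv by (simp add: inner_commute inner_add_right)
      also have "a \<bullet> z = qf PA a + l * qf QA a"
        unfolding ea[symmetric] by (simp add: qf_def matrix_vector_mult_add_rdistrib inner_add_right scaleR_matrix_vector_assoc[symmetric])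
      also have "b \<bullet> z = qf PB b + (1 - l) * qf QB b"
        unfolding eb[symmetric] by (simp add: qf_def matrix_vector_mult_add_rdistrib inner_add_right scaleR_matrix_vector_assoc[symmetric])
      finally show ?thesis by simp
    qed
    finally show ?thesis .
  qed
  have "2 * ((G *v x) \<bullet> x) - qf C (G *v x) \<le> qf (matrix_inv C) x"
    by (rule VAR2[OF spd_sym[OF sC] spd_invertible[OF sC] spd_psd[OF sC]])
  moreover have "(G *v x) \<bullet> x = qf G x" unfolding qf_def by (simp add: inner_commute)
  ultimately show ?thesis using key[of x] unfolding C_def by linarith
qed

lemma step4:
  fixes PA PB QA QB S :: "real^'n^'n"
  assumes spd: "spd PA" "spd PB" "spd QA" "spd QB" and l: "0 \<le> l" "l \<le> 1"
    and H: "\<And>x ua vb wa wb. x = PA *v ua + QA *v wa \<Longrightarrow> x = PB *v vb + QB *v wb \<Longrightarrow>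
        qf S x \<le> l * qf PA ua + (1 - l) * qf PB vb + qf QA wa + qf QB wb"
  defines "G \<equiv> l *\<^sub>R matrix_inv (PA + l *\<^sub>R QA) + (1 - l) *\<^sub>R matrix_inv (PB + (1 - l) *\<^sub>R QB)"
  shows "qf S x \<le> qf G x"
proof -
  have sA: "spd (PA + l *\<^sub>R QA)" by (rule spd_comb) (use spd l in auto)
  have sB: "spd (PB + (1 - l) *\<^sub>R QB)" by (rule spd_comb) (use spd l in auto)
  have iA: "invertible (PA + l *\<^sub>R QA)" by (rule spd_invertible[OF sA])
  have iB: "invertible (PB + (1 - l) *\<^sub>R QB)" by (rule spd_invertible[OF sB])
  define a where "a = matrix_inv (PA + l *\<^sub>R QA) *v x"
  define b where "b = matrix_inv (PB + (1 - l) *\<^sub>R QB) *v x"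
  have ea: "(PA + l *\<^sub>R QA) *v a = x" unfolding a_def by (rule inv_mv1[OF iA])
  have eb: "(PB + (1 - l) *\<^sub>R QB) *v b = x" unfolding b_def by (rule inv_mv1[OF iB])
  have xa: "x = PA *v a + QA *v (l *\<^sub>R a)"
    using ea by (simp add: matrix_vector_mult_add_rdistrib scaleR_matrix_vector_assoc[symmetric] matrix_vector_mult_scaleR)
  have xb: "x = PB *v b + QB *v ((1 - l) *\<^sub>R b)"
    using eb by (simp add: matrix_vector_mult_add_rdistrib scaleR_matrix_vector_assoc[symmetric] matrix_vector_mult_scaleR)
  have "qf S x \<le> l * qf PA a + (1 - l) * qf PB b + qf QA (l *\<^sub>R a) + qf QB ((1 - l) *\<^sub>R b)"
    by (rule H[OF xa xb])
  also have "\<dots> = l * (a \<bullet> x) + (1 - l) * (b \<bullet> x)"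
  proof -
    have A: "a \<bullet> x = qf PA a + l * qf QA a"
      by (subst ea[symmetric]) (simp add: qf_def matrix_vector_mult_add_rdistrib inner_add_right scaleR_matrix_vector_assoc[symmetric])
    have B: "b \<bullet> x = qf PB b + (1 - l) * qf QB b"
      by (subst eb[symmetric]) (simp add: qf_def matrix_vector_mult_add_rdistrib inner_add_right scaleR_matrix_vector_assoc[symmetric])
    show ?thesis unfolding qf_scale A B by (simp add: algebra_simps power2_eq_square)
  qed
  also have "\<dots> = qf G x"
    unfolding G_def qf_def a_def b_def G_mv by (simp add: inner_commute inner_add_right)
  finally show ?thesis .
qed



declare transpose_matrix_vector [simp del]

lemma outer_mv: "(\<chi> i j. a$i * b$j / s) *v y = ((b \<bullet> y) / s) *\<^sub>R (a::real^'n)"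
  for b y :: "real^'n"
  by (simp add: vec_eq_iff matrix_vector_mult_def inner_vec_def sum_divide_distrib sum_distrib_left algebra_simps)

lemma transpose_zero[simp]: "transpose (0::real^'n^'n) = 0"
  by (simp add: transpose_def vec_eq_iff)

lemma lin_qf:
  fixes A :: "real^'n^'n"
  assumes "spd A"
  shows "2 * (a \<bullet> (A *v w)) - qf A a \<le> qf A w"
proof -
  have "0 \<le> qf A (a - w)" by (rule spd_psd[OF assms])
  then show ?thesis unfolding qf_diff[OF spd_sym[OF assms]] by simp
qed

lemma spd_zero: "spd A \<Longrightarrow> qf A x = 0 \<Longrightarrow> x = 0"
  using spd_pos by force

lemma exists_M:
  fixes PA PB :: "real^'n^'n"
  assumes sA: "spd PA" and sB: "spd PB"
  shows "\<exists>M\<in>A_split PA PB. \<forall>\<alpha> \<beta>. 2 * (\<alpha> \<bullet> (PA *v ua)) + 2 * (\<beta> \<bullet> (PB *v vb)) - qf PA \<alpha>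
            - 2 * (\<alpha> \<bullet> (M *v \<beta>)) - qf PB \<beta> \<le> max (qf PA ua) (qf PB vb)"
proof -
  define p where "p = qf PA ua"
  define t where "t = qf PB vb"
  define s where "s = max p t"
  have p0: "0 \<le> p" and t0: "0 \<le> t" unfolding p_def t_def using spd_psd sA sB by auto
  show ?thesis
  proof (cases "s = 0")
    case True
    then have "p = 0" "t = 0" using p0 t0 unfolding s_def by auto
    then have u0: "ua = 0" and v0: "vb = 0" using spd_zero sA sB unfolding p_def t_def by auto
    have "0 \<in> A_split PA PB" unfolding A_split_def
      using spd_psd[OF sA] spd_psd[OF sB] unfolding qf_def by (auto intro: add_nonneg_nonneg)
    then show ?thesis
    proof (intro bexI[of _ 0] allI)
      fix \<alpha> \<beta> :: "real^'n"
      show "2 * (\<alpha> \<bullet> (PA *v ua)) + 2 * (\<beta> \<bullet> (PB *v vb)) - qf PA \<alpha> - 2 * (\<alpha> \<bullet> (0 *v \<beta>)) - qf PB \<beta>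
          \<le> max (qf PA ua) (qf PB vb)"
        using spd_psd[OF sA, of \<alpha>] spd_psd[OF sB, of \<beta>] u0 v0 by simp
    qed
  next
    case False
    then have sp: "s > 0" using p0 t0 unfolding s_def by auto
    define a where "a = PA *v ua"
    define b where "b = PB *v vb"
    define M :: "real^'n^'n" where "M = (\<chi> i j. a$i * b$j / s)"
    have Mv: "\<And>y. M *v y = ((b \<bullet> y) / s) *\<^sub>R a" unfolding M_def by (rule outer_mv)
    have MA: "M \<in> A_split PA PB"
      unfolding A_split_def
    proof (clarify)
      fix x y :: "real^'n"
      define X where "X = qf PA x"
      define Y where "Y = qf PB y"
      define c1 where "c1 = x \<bullet> a"
      define c2 where "c2 = y \<bullet> b"
      have X0: "0 \<le> X" and Y0: "0 \<le> Y" unfolding X_def Y_def using spd_psd sA sB by auto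
      have "c1\<^sup>2 \<le> X * p" unfolding c1_def X_def p_def a_def
        by (rule CS[OF spd_sym[OF sA] spd_psd[OF sA]])
      also have "\<dots> \<le> X * s" using X0 unfolding s_def by (simp add: mult_left_mono)
      finally have c1s: "c1\<^sup>2 \<le> X * s" .
      have "c2\<^sup>2 \<le> Y * t" unfolding c2_def Y_def t_def b_def
        by (rule CS[OF spd_sym[OF sB] spd_psd[OF sB]])
      also have "\<dots> \<le> Y * s" using Y0 unfolding s_def by (simp add: mult_left_mono)
      finally have c2s: "c2\<^sup>2 \<le> Y * s" .
      have "(c1 * c2)\<^sup>2 \<le> (X * s) * (Y * s)"
        unfolding power_mult_distrib by (rule mult_mono[OF c1s c2s]) (use X0 sp in auto)
      also have "\<dots> \<le> ((X + Y) * s / 2)\<^sup>2"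
      proof -
        have "0 \<le> (X - Y)\<^sup>2 * s\<^sup>2" by simp
        then show ?thesis by (simp add: power2_eq_square algebra_simps)
      qed
      finally have "\<bar>c1 * c2\<bar> \<le> \<bar>(X + Y) * s / 2\<bar>" by (simp only: abs_le_square_iff)
      then have cc: "\<bar>c1 * c2\<bar> \<le> (X + Y) * s / 2" using X0 Y0 sp by simp
      have "x \<bullet> (M *v y) = c1 * c2 / s" unfolding Mv c1_def c2_def by (simp add: inner_commute)
      moreover have "y \<bullet> (transpose M *v x) = c1 * c2 / s" unfolding tdot Mv c1_def c2_def by (simp add: inner_commute)
      moreover have "- (X + Y) \<le> 2 * (c1 * c2 / s)"
      proof -
        have "- ((X + Y) * s / 2) \<le> c1 * c2" using cc by linarith
        then have "- ((X + Y) / 2) \<le> c1 * c2 / s" using sp by (simp add: pos_le_divide_eq)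
        then show ?thesis by argo
      qed
      ultimately show "0 \<le> x \<bullet> (PA *v x) + x \<bullet> (M *v y) + y \<bullet> (transpose M *v x) + y \<bullet> (PB *v y)"
        using X_def Y_def unfolding qf_def by linarith
    qed
    show ?thesis
    proof (intro bexI[OF _ MA] allI)
      fix \<alpha> \<beta> :: "real^'n"
      show "2 * (\<alpha> \<bullet> (PA *v ua)) + 2 * (\<beta> \<bullet> (PB *v vb)) - qf PA \<alpha> - 2 * (\<alpha> \<bullet> (M *v \<beta>)) - qf PB \<beta>
          \<le> max (qf PA ua) (qf PB vb)"
      proof (cases "p \<le> t")
        case True
        then have st: "s = t" unfolding s_def by simp
        have "M *v vb = a" unfolding Mv using sp st unfolding t_def b_def qf_def
          by (simp add: inner_commute)
        have "0 \<le> qf PA \<alpha> + 2 * (\<alpha> \<bullet> (M *v (\<beta> - vb))) + qf PB (\<beta> - vb)" by (rule Asplit_ineq[OF MA])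
        also have "\<dots> = qf PA \<alpha> + 2 * (\<alpha> \<bullet> (M *v \<beta>)) - 2 * (\<alpha> \<bullet> (PA *v ua)) + qf PB \<beta> - 2 * (\<beta> \<bullet> (PB *v vb)) + t"
          unfolding qf_diff[OF spd_sym[OF sB]] matrix_vector_mult_diff_distrib inner_diff_right
            \<open>M *v vb = a\<close> a_def t_def by simp
        finally show ?thesis using st unfolding s_def p_def t_def by linarith
      next
        case False
        then have st: "s = p" unfolding s_def by simp
        have "ua \<bullet> (M *v \<beta>) = \<beta> \<bullet> (PB *v vb)" unfolding Mv using sp st unfolding p_def a_def b_def qf_def
          by (simp add: inner_commute)
        have "0 \<le> qf PA (\<alpha> - ua) + 2 * ((\<alpha> - ua) \<bullet> (M *v \<beta>)) + qf PB \<beta>" by (rule Asplit_ineq[OF MA])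
        also have "\<dots> = qf PA \<alpha> - 2 * (\<alpha> \<bullet> (PA *v ua)) + p + 2 * (\<alpha> \<bullet> (M *v \<beta>)) - 2 * (\<beta> \<bullet> (PB *v vb)) + qf PB \<beta>"
          unfolding qf_diff[OF spd_sym[OF sA]] inner_diff_left
            \<open>ua \<bullet> (M *v \<beta>) = \<beta> \<bullet> (PB *v vb)\<close> p_def by simp
        finally show ?thesis using st unfolding s_def p_def t_def by linarith
      qed
    qed
  qed
qed

lemma homog:
  fixes PA PB QA QB M B :: "real^'n^'n"
  assumes spd: "spd PA" "spd PB" "spd QA" "spd QB" and M: "M \<in> A_split PA PB"
    and sub: "V_star PA PB QA QB \<subseteq> ellipsoid B"
  shows "qf (matrix_inv B) x \<le> qf (matrix_inv (C_F_opt PA PB QA QB M)) x"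
proof (cases "x = 0")
  case True then show ?thesis by simp
next
  case False
  define C where "C = C_F_opt PA PB QA QB M"
  have sCi: "spd (matrix_inv C)" unfolding C_def by (rule spd_inv[OF Copt_spd[OF spd M]])
  define r where "r = qf (matrix_inv C) x"
  have rp: "r > 0" unfolding r_def by (rule spd_pos[OF sCi False])
  define x' where "x' = (1 / sqrt r) *\<^sub>R x"
  have "qf (matrix_inv C) x' = 1" unfolding x'_def qf_scale using rp
    by (simp add: power_divide r_def)
  then have "x' \<in> ellipsoid C" unfolding ellipsoid_def qf_def by simp
  then have "x' \<in> V_star PA PB QA QB" unfolding V_star_def C_def using M by blast
  then have "x' \<in> ellipsoid B" using sub by blast
  then have "qf (matrix_inv B) x' \<le> 1" unfolding ellipsoid_def qf_def by simp
  then have "qf (matrix_inv B) x / r \<le> 1" unfolding x'_def qf_scale using rp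
    by (simp add: power_divide)
  then show ?thesis using rp unfolding r_def C_def by simp
qed

lemma stepA:
  fixes PA PB QA QB B :: "real^'n^'n"
  assumes spd: "spd PA" "spd PB" "spd QA" "spd QB"
    and sub: "V_star PA PB QA QB \<subseteq> ellipsoid B"
    and xa: "x = PA *v ua + QA *v wa" and xb: "x = PB *v vb + QB *v wb"
  shows "qf (matrix_inv B) x \<le> max (qf PA ua) (qf PB vb) + qf QA wa + qf QB wb"
proof -
  obtain M where M: "M \<in> A_split PA PB" and
    Mi: "\<And>\<alpha> \<beta>. 2 * (\<alpha> \<bullet> (PA *v ua)) + 2 * (\<beta> \<bullet> (PB *v vb)) - qf PA \<alpha>
            - 2 * (\<alpha> \<bullet> (M *v \<beta>)) - qf PB \<beta> \<le> max (qf PA ua) (qf PB vb)"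
    using exists_M[OF spd(1,2), of ua vb] by blast
  define C where "C = C_F_opt PA PB QA QB M"
  have sC: "spd C" unfolding C_def by (rule Copt_spd[OF spd M])
  have "qf (matrix_inv B) x \<le> qf (matrix_inv C) x" unfolding C_def by (rule homog[OF spd M sub])
  also have "qf (matrix_inv C) x \<le> max (qf PA ua) (qf PB vb) + qf QA wa + qf QB wb"
  proof (rule VAR[OF spd_invertible[OF sC]])
    fix y :: "real^'n"
    obtain as where e: "qf C y = Ff PA PB QA QB M y as"
      unfolding C_def using Copt_facts(1)[OF spd M] by blast
    define \<beta> where "\<beta> = y - as"
    have y: "y = as + \<beta>" unfolding \<beta>_def by simp
    have "2 * (y \<bullet> x) = 2 * (as \<bullet> (PA *v ua)) + 2 * (as \<bullet> (QA *v wa)) + 2 * (\<beta> \<bullet> (PB *v vb)) + 2 * (\<beta> \<bullet> (QB *v wb))"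
    proof -
      have "y \<bullet> x = as \<bullet> x + \<beta> \<bullet> x" unfolding y by (simp add: inner_add_left)
      also have "as \<bullet> x = as \<bullet> (PA *v ua) + as \<bullet> (QA *v wa)" using xa by (simp add: inner_add_right)
      also have "\<beta> \<bullet> x = \<beta> \<bullet> (PB *v vb) + \<beta> \<bullet> (QB *v wb)" using xb by (simp add: inner_add_right)
      finally show ?thesis by simp
    qed
    moreover have "Ff PA PB QA QB M y as = qf PA as + qf QA as + 2 * (as \<bullet> (M *v \<beta>)) + qf PB \<beta> + qf QB \<beta>"
      unfolding Ff_def \<beta>_def qf_madd by simp
    moreover have "2 * (as \<bullet> (QA *v wa)) - qf QA as \<le> qf QA wa" by (rule lin_qf[OF spd(3)])
    moreover have "2 * (\<beta> \<bullet> (QB *v wb)) - qf QB \<beta> \<le> qf QB wb" by (rule lin_qf[OF spd(4)])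
    moreover note Mi[of as \<beta>]
    ultimately show "2 * (y \<bullet> x) - qf C y \<le> max (qf PA ua) (qf PB vb) + qf QA wa + qf QB wb"
      unfolding e by linarith
  qed
  finally show ?thesis .
qed



declare transpose_matrix_vector [simp del]

lemma quad_qf:
  fixes A :: "real^'n^'n" and h :: "'a::real_vector \<Rightarrow> real^'n"
  assumes sA: "sym_mat A" and h: "\<And>z w s t. h (s *\<^sub>R z + t *\<^sub>R w) = s *\<^sub>R h z + t *\<^sub>R h w"
  shows "quad (\<lambda>z. qf A (h z))"
  unfolding quad_def
proof (intro allI)
  fix x y :: 'a and s t :: real
  have hp: "h (x + y) = h x + h y" using h[of 1 x 1 y] by simp
  show "qf A (h (s *\<^sub>R x + t *\<^sub>R y)) = s\<^sup>2 * qf A (h x) + s * t * (qf A (h (x + y)) - qf A (h x) - qf A (h y)) + t\<^sup>2 * qf A (h y)"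
    unfolding h hp qf_add[OF sA] qf_scale
    by (simp add: matrix_vector_mult_scaleR algebra_simps)
qed

lemma quad_add: "quad f \<Longrightarrow> quad g \<Longrightarrow> quad (\<lambda>x. f x + g x)"
  using quad_lin[of f g 1 1] by simp

lemma quad_sub: "quad f \<Longrightarrow> quad g \<Longrightarrow> quad (\<lambda>x. f x - g x)"
  using quad_lin[of f g 1 "-1"] by simp

theorem theorem3:
  fixes PA PB QA QB B :: "real^'n^'n"
  assumes "spd PA" and "spd PB" and "spd QA" and "spd QB"
    and "spd B"
    and "tightly_circumscribes B (V_star PA PB QA QB)"
  shows "\<exists>\<omega>1 \<in> {0..1}. B = B_SCI PA PB QA QB \<omega>1"
proof -
  note spd = assms(1-4)
  have sub: "V_star PA PB QA QB \<subseteq> ellipsoid B"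
    and mini: "\<And>Q. spd Q \<Longrightarrow> V_star PA PB QA QB \<subseteq> ellipsoid Q \<Longrightarrow> ellipsoid Q \<subseteq> ellipsoid B \<Longrightarrow> Q = B"
    using assms(6) unfolding tightly_circumscribes_def by blast+
  define S where "S = matrix_inv B"
  have sS: "spd S" unfolding S_def by (rule spd_inv[OF assms(5)])
  define V :: "((real^'n) \<times> (real^'n) \<times> (real^'n) \<times> (real^'n) \<times> (real^'n)) set" where
    "V = {z. fst z = PA *v fst (snd z) + QA *v fst (snd (snd (snd z)))
           \<and> fst z = PB *v fst (snd (snd z)) + QB *v snd (snd (snd (snd z)))}"
  define f where "f = (\<lambda>z::((real^'n) \<times> (real^'n) \<times> (real^'n) \<times> (real^'n) \<times> (real^'n)).
     qf PA (fst (snd z)) + qf QA (fst (snd (snd (snd z)))) + qf QB (snd (snd (snd (snd z)))) - qf S (fst z))"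
  define g where "g = (\<lambda>z::((real^'n) \<times> (real^'n) \<times> (real^'n) \<times> (real^'n) \<times> (real^'n)).
     qf PB (fst (snd (snd z))) + qf QA (fst (snd (snd (snd z)))) + qf QB (snd (snd (snd (snd z)))) - qf S (fst z))"
  have sy: "sym_mat PA" "sym_mat PB" "sym_mat QA" "sym_mat QB" "sym_mat S"
    using spd sS spd_sym by auto
  have qf1: "quad f" unfolding f_def
    by (intro quad_sub quad_add quad_qf sy) auto
  have qg1: "quad g" unfolding g_def
    by (intro quad_sub quad_add quad_qf sy) auto
  have Vc: "s *\<^sub>R z + t *\<^sub>R w \<in> V" if "z \<in> V" "w \<in> V" for z w s t
  proof -
    obtain x1 u1 v1 a1 b1 where z: "z = (x1, u1, v1, a1, b1)" by (cases z) auto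
    obtain x2 u2 v2 a2 b2 where w: "w = (x2, u2, v2, a2, b2)" by (cases w) auto
    have e1: "x1 = PA *v u1 + QA *v a1" "x1 = PB *v v1 + QB *v b1"
      and e2: "x2 = PA *v u2 + QA *v a2" "x2 = PB *v v2 + QB *v b2"
      using that unfolding V_def z w by auto
    have "s *\<^sub>R x1 + t *\<^sub>R x2 = PA *v (s *\<^sub>R u1 + t *\<^sub>R u2) + QA *v (s *\<^sub>R a1 + t *\<^sub>R a2)"
      unfolding e1(1) e2(1) by (simp add: matrix_vector_right_distrib matrix_vector_mult_scaleR algebra_simps)
    moreover have "s *\<^sub>R x1 + t *\<^sub>R x2 = PB *v (s *\<^sub>R v1 + t *\<^sub>R v2) + QB *v (s *\<^sub>R b1 + t *\<^sub>R b2)"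
      unfolding e1(2) e2(2) by (simp add: matrix_vector_right_distrib matrix_vector_mult_scaleR algebra_simps)
    ultimately show ?thesis unfolding V_def z w by simp
  qed
  have V0: "0 \<in> V" unfolding V_def by simp
  have mx: "\<And>z. z \<in> V \<Longrightarrow> max (f z) (g z) \<ge> 0"
  proof -
    fix z assume "z \<in> V"
    then obtain x ua vb wa wb where z: "z = (x, ua, vb, wa, wb)" and
      xa: "x = PA *v ua + QA *v wa" and xb: "x = PB *v vb + QB *v wb"
      unfolding V_def by (cases z) auto
    have "qf S x \<le> max (qf PA ua) (qf PB vb) + qf QA wa + qf QB wb"
      unfolding S_def by (rule stepA[OF spd sub xa xb])
    then show "max (f z) (g z) \<ge> 0" unfolding f_def g_def z by (simp add: max_def split: if_splits)
  qed
  obtain l where l: "0 \<le> l" "l \<le> 1" and lV: "\<forall>z\<in>V. 0 \<le> l * f z + (1 - l) * g z"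
    using yuan[OF qf1 qg1 Vc V0 mx] by blast
  define G where "G = l *\<^sub>R matrix_inv (PA + l *\<^sub>R QA) + (1 - l) *\<^sub>R matrix_inv (PB + (1 - l) *\<^sub>R QB)"
  have SG: "qf S x \<le> qf G x" for x
    unfolding G_def
  proof (rule step4[OF spd l])
    fix x ua vb wa wb
    assume xa: "x = PA *v ua + QA *v wa" and xb: "x = PB *v vb + QB *v wb"
    then have "(x, ua, vb, wa, wb) \<in> V" unfolding V_def by simp
    then have "0 \<le> l * f (x, ua, vb, wa, wb) + (1 - l) * g (x, ua, vb, wa, wb)" using lV by blast
    then show "qf S x \<le> l * qf PA ua + (1 - l) * qf PB vb + qf QA wa + qf QB wb"
      unfolding f_def g_def by (simp add: algebra_simps)
  qed
  have sA: "spd (PA + l *\<^sub>R QA)" by (rule spd_comb) (use spd l in auto)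
  have sB: "spd (PB + (1 - l) *\<^sub>R QB)" by (rule spd_comb) (use spd l in auto)
  have sG: "spd G" unfolding G_def by (rule spd_G[OF spd_inv[OF sA] spd_inv[OF sB] l])
  define Bl where "Bl = B_SCI PA PB QA QB l"
  have Bl: "Bl = matrix_inv G" unfolding Bl_def B_SCI_def G_def ..
  have sBl: "spd Bl" unfolding Bl by (rule spd_inv[OF sG])
  have iBl: "matrix_inv Bl = G" unfolding Bl by (rule inv_inv[OF spd_invertible[OF sG]])
  have "V_star PA PB QA QB \<subseteq> ellipsoid Bl"
  proof
    fix x assume "x \<in> V_star PA PB QA QB"
    then obtain M where M: "M \<in> A_split PA PB" and xe: "x \<in> ellipsoid (C_F_opt PA PB QA QB M)"
      unfolding V_star_def by blast
    have "qf G x \<le> qf (matrix_inv (C_F_opt PA PB QA QB M)) x"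
      unfolding G_def by (rule step6[OF spd M l])
    also have "\<dots> \<le> 1" using xe unfolding ellipsoid_def qf_def by simp
    finally show "x \<in> ellipsoid Bl" unfolding ellipsoid_def iBl qf_def by simp
  qed
  moreover have "ellipsoid Bl \<subseteq> ellipsoid B"
  proof
    fix x assume "x \<in> ellipsoid Bl"
    then have "qf G x \<le> 1" unfolding ellipsoid_def iBl qf_def by simp
    then have "qf S x \<le> 1" using SG[of x] by linarith
    then show "x \<in> ellipsoid B" unfolding ellipsoid_def S_def qf_def by simp
  qed
  ultimately have "Bl = B" using mini[OF sBl] by blast
  then show ?thesis using l unfolding Bl_def by auto
qed


end
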